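(* Let $K$ be a subfield of $\mathbb{R}$, let $A$ be a commutative $K$-algebra (with $1$) and let $T\subseteq A$ be a preordering of $A$. Suppose that $A$ (equipped with $T$) is f.f., almost archimedean and reduced (i.e. $A$ has no nonzero nilpotent elements). Then $A$ is the directed union $A=\bigcup B$ of its finitely generated $K$-subalgebras $B$ that are almost archimedean when equipped with the preordering $T\cap B$. More precisely, every finite subset of $A$ is contained in such a subalgebra $B$, and any two such subalgebras are contained in a third one.
   Context: A preordering of a commutative ring $A$ is a subset $T\subseteq A$ with $T+T\subseteq T$, $TT\subseteq T$ and $a^2\in T$ for all $a\in A$. If $B\subseteq A$ is a subring, $B$ is equipped with the preordering $T\cap B$. An ordering of a ring $A$ is a subset $P\subseteq A$ with $P+P\subseteq P$, $PP\subseteq P$, $P\cup -P=A$ and $P\cap -P$ a prime ideal of $A$. For a ring $A$ with preordering $T$, $\operatorname{sper} A$ denotes the set of orderings $P$ of $A$ with $T\subseteq P$. An ordering $P$ is archimedean if for every $a\in A$ there is $N\in\mathbb{N}$ with $N-a\in P$. The preordered ring $A$ is called almost archimedean if every $P\in\operatorname{sper}A$ for which $P\cap -P$ is a minimal prime ideal of $A$ is archimedean. The $K$-algebra $A$ is called f.f. if $A$ has only finitely many minimal prime ideals and, for each minimal prime ideal $\mathfrak{p}$ of $A$, the quotient field $\operatorname{qf}(A/\mathfrak{p})$ is a finitely generated field extension of $K$. "f.g." means finitely generated as a $K$-algebra. *)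

theory Defs
  imports "HOL-Algebra.Generated_Fields"
begin

text \<open>The commutative ring A is the whole type 'a (class comm_ring_1).
 K is a subfield of the reals given as a set; the K-algebra structure is a map
 iota : real => 'a which is a unital ring homomorphism on K.\<close>

definition subfield_of_reals :: "real set \<Rightarrow> bool" where
  "subfield_of_reals K \<longleftrightarrow> 0 \<in> K \<and> 1 \<in> K \<and>
     (\<forall>x\<in>K. \<forall>y\<in>K. x + y \<in> K \<and> x * y \<in> K) \<and>
     (\<forall>x\<in>K. - x \<in> K) \<and> (\<forall>x\<in>K. x \<noteq> 0 \<longrightarrow> inverse x \<in> K)"

definition K_algebra_map :: "real set \<Rightarrow> (real \<Rightarrow> 'a::comm_ring_1) \<Rightarrow> bool" where
  "K_algebra_map K iota \<longleftrightarrow> iota 1 = 1 \<and>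
     (\<forall>x\<in>K. \<forall>y\<in>K. iota (x + y) = iota x + iota y \<and> iota (x * y) = iota x * iota y)"

definition preordering :: "'a::comm_ring_1 set \<Rightarrow> bool" where
  "preordering T \<longleftrightarrow> (\<forall>x\<in>T. \<forall>y\<in>T. x + y \<in> T \<and> x * y \<in> T) \<and> (\<forall>a. a\<^sup>2 \<in> T)"

definition subring_of :: "'a::comm_ring_1 set \<Rightarrow> bool" where
  "subring_of B \<longleftrightarrow> 1 \<in> B \<and> (\<forall>x\<in>B. \<forall>y\<in>B. x + y \<in> B \<and> x * y \<in> B) \<and> (\<forall>x\<in>B. - x \<in> B)"

definition prime_ideal_in :: "'a::comm_ring_1 set \<Rightarrow> 'a set \<Rightarrow> bool" where
  "prime_ideal_in B I \<longleftrightarrow> I \<subseteq> B \<and> 0 \<in> I \<and> (\<forall>x\<in>I. \<forall>y\<in>I. x + y \<in> I) \<and>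
     (\<forall>b\<in>B. \<forall>x\<in>I. b * x \<in> I) \<and> I \<noteq> B \<and>
     (\<forall>a\<in>B. \<forall>b\<in>B. a * b \<in> I \<longrightarrow> a \<in> I \<or> b \<in> I)"

definition minimal_prime_in :: "'a::comm_ring_1 set \<Rightarrow> 'a set \<Rightarrow> bool" where
  "minimal_prime_in B I \<longleftrightarrow> prime_ideal_in B I \<and>
     (\<forall>J. prime_ideal_in B J \<and> J \<subseteq> I \<longrightarrow> J = I)"

definition ordering_of :: "'a::comm_ring_1 set \<Rightarrow> 'a set \<Rightarrow> bool" where
  "ordering_of B P \<longleftrightarrow> P \<subseteq> B \<and> (\<forall>x\<in>P. \<forall>y\<in>P. x + y \<in> P \<and> x * y \<in> P) \<and>
     P \<union> uminus ` P = B \<and> prime_ideal_in B (P \<inter> uminus ` P)"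

definition sper :: "'a::comm_ring_1 set \<Rightarrow> 'a set \<Rightarrow> 'a set set" where
  "sper B T = {P. ordering_of B P \<and> T \<subseteq> P}"

definition archimedean_ordering :: "'a::comm_ring_1 set \<Rightarrow> 'a set \<Rightarrow> bool" where
  "archimedean_ordering B P \<longleftrightarrow> (\<forall>a\<in>B. \<exists>N::nat. of_nat N - a \<in> P)"

definition almost_archimedean :: "'a::comm_ring_1 set \<Rightarrow> 'a set \<Rightarrow> bool" where
  "almost_archimedean B T \<longleftrightarrow>
     (\<forall>P\<in>sper B T. minimal_prime_in B (P \<inter> uminus ` P) \<longrightarrow> archimedean_ordering B P)"

definition K_subalgebra :: "real set \<Rightarrow> (real \<Rightarrow> 'a::comm_ring_1) \<Rightarrow> 'a set \<Rightarrow> bool" where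
  "K_subalgebra K iota B \<longleftrightarrow> subring_of B \<and> iota ` K \<subseteq> B"

definition K_subalg_gen :: "real set \<Rightarrow> (real \<Rightarrow> 'a::comm_ring_1) \<Rightarrow> 'a set \<Rightarrow> 'a set" where
  "K_subalg_gen K iota S = \<Inter> {B. K_subalgebra K iota B \<and> S \<subseteq> B}"

definition fg_K_subalgebra :: "real set \<Rightarrow> (real \<Rightarrow> 'a::comm_ring_1) \<Rightarrow> 'a set \<Rightarrow> bool" where
  "fg_K_subalgebra K iota B \<longleftrightarrow> (\<exists>S. finite S \<and> B = K_subalg_gen K iota S)"

definition reduced :: "'a::comm_ring_1 itself \<Rightarrow> bool" where
  "reduced _ \<longleftrightarrow> (\<forall>(x::'a) (n::nat). x ^ n = 0 \<longrightarrow> x = 0)"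

text \<open>The quotient field qf(A/p) of A/p for a prime ideal p of A, built as
 equivalence classes of fractions (a,b) with b not in p.\<close>
definition frac_rel :: "'a::comm_ring_1 set \<Rightarrow> (('a \<times> 'a) \<times> ('a \<times> 'a)) set" where
  "frac_rel p = {((a,b),(c,d)). b \<notin> p \<and> d \<notin> p \<and> a * d - b * c \<in> p}"

definition frac :: "'a::comm_ring_1 set \<Rightarrow> 'a \<Rightarrow> 'a \<Rightarrow> ('a \<times> 'a) set" where
  "frac p a b = frac_rel p `` {(a, b)}"

definition frac_num :: "('a \<times> 'a) set \<Rightarrow> 'a" where
  "frac_num X = fst (SOME x. x \<in> X)"

definition frac_den :: "('a \<times> 'a) set \<Rightarrow> 'a" where
  "frac_den X = snd (SOME x. x \<in> X)"

definition qf_ring :: "'a::comm_ring_1 set \<Rightarrow> ('a \<times> 'a) set ring" where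
  "qf_ring p = \<lparr> carrier = (UNIV \<times> (- p)) // frac_rel p,
     monoid.mult = (\<lambda>X Y. frac p (frac_num X * frac_num Y) (frac_den X * frac_den Y)),
     one = frac p 1 1,
     zero = frac p 0 1,
     add = (\<lambda>X Y. frac p (frac_num X * frac_den Y + frac_num Y * frac_den X)
                         (frac_den X * frac_den Y)) \<rparr>"

definition fg_field_ext :: "real set \<Rightarrow> (real \<Rightarrow> 'a::comm_ring_1) \<Rightarrow> 'a set \<Rightarrow> bool" where
  "fg_field_ext K iota p \<longleftrightarrow> (\<exists>S. finite S \<and> S \<subseteq> carrier (qf_ring p) \<and>
     generate_field (qf_ring p) ((\<lambda>k. frac p (iota k) 1) ` K \<union> S) = carrier (qf_ring p))"

definition ff_algebra :: "real set \<Rightarrow> (real \<Rightarrow> 'a::comm_ring_1) \<Rightarrow> bool" where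
  "ff_algebra K iota \<longleftrightarrow> finite {p::'a set. minimal_prime_in UNIV p} \<and>
     (\<forall>p. minimal_prime_in UNIV p \<longrightarrow> fg_field_ext K iota p)"

end

theory Submission
  imports Defs
begin


definition idl :: "'a::comm_ring_1 set \<Rightarrow> bool" where
  "idl I \<longleftrightarrow> 0 \<in> I \<and> (\<forall>x\<in>I. \<forall>y\<in>I. x + y \<in> I) \<and> (\<forall>b x. x \<in> I \<longrightarrow> b * x \<in> I)"

lemma prime_UNIV_iff:
  "prime_ideal_in UNIV p \<longleftrightarrow> idl p \<and> 1 \<notin> p \<and> (\<forall>a b. a * b \<in> p \<longrightarrow> a \<in> p \<or> b \<in> p)"
proof
  assume h: "prime_ideal_in UNIV p"
  have "1 \<notin> p"
  proof
    assume "1 \<in> p"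
    then have "\<forall>x. x * 1 \<in> p" using h unfolding prime_ideal_in_def by blast
    then show False using h unfolding prime_ideal_in_def by auto
  qed
  then show "idl p \<and> 1 \<notin> p \<and> (\<forall>a b. a * b \<in> p \<longrightarrow> a \<in> p \<or> b \<in> p)"
    using h unfolding prime_ideal_in_def idl_def by auto
next
  assume "idl p \<and> 1 \<notin> p \<and> (\<forall>a b. a * b \<in> p \<longrightarrow> a \<in> p \<or> b \<in> p)"
  then show "prime_ideal_in UNIV p" unfolding prime_ideal_in_def idl_def by auto
qed

lemma idl_lin: "idl I \<Longrightarrow> x \<in> I \<Longrightarrow> y \<in> I \<Longrightarrow> z = u * x + v * y \<Longrightarrow> z \<in> I"
  unfolding idl_def by auto

lemma idl_mult: "idl I \<Longrightarrow> x \<in> I \<Longrightarrow> z = u * x \<Longrightarrow> z \<in> I"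
  unfolding idl_def by auto

lemma idl_0: "idl I \<Longrightarrow> 0 \<in> I"
  unfolding idl_def by auto

context
  fixes p :: "'a::comm_ring_1 set"
  assumes pp: "prime_ideal_in UNIV p"
begin

lemma pidl: "idl p" and p1: "1 \<notin> p" and pprime: "a * b \<in> p \<Longrightarrow> a \<in> p \<or> b \<in> p"
  using pp by (auto simp: prime_UNIV_iff)

lemma pmul_notin: "a \<notin> p \<Longrightarrow> b \<notin> p \<Longrightarrow> a * b \<notin> p"
  using pprime by blast

lemma frac_mem: "(c, d) \<in> frac p a b \<longleftrightarrow> b \<notin> p \<and> d \<notin> p \<and> a * d - b * c \<in> p"
  by (simp add: frac_def frac_rel_def)

lemma frac_eq: assumes "b \<notin> p" "d \<notin> p"
  shows "frac p a b = frac p c d \<longleftrightarrow> a * d - b * c \<in> p"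
proof
  assume "frac p a b = frac p c d"
  moreover have "(c, d) \<in> frac p c d" using assms idl_0[OF pidl] by (simp add: frac_mem)
  ultimately have "(c, d) \<in> frac p a b" by simp
  then show "a * d - b * c \<in> p" by (simp add: frac_mem)
next
  assume h: "a * d - b * c \<in> p"
  have "\<forall>x y. (x, y) \<in> frac p a b \<longleftrightarrow> (x, y) \<in> frac p c d"
  proof (intro allI)
    fix x y
    show "(x, y) \<in> frac p a b \<longleftrightarrow> (x, y) \<in> frac p c d"
    proof
      assume "(x, y) \<in> frac p a b"
      then have y: "y \<notin> p" and h2: "a * y - b * x \<in> p" by (auto simp: frac_mem)
      have "b * (c * y - d * x) \<in> p"
        by (rule idl_lin[OF pidl h h2, of _ "-y" d]) (simp add: algebra_simps)
      then have "c * y - d * x \<in> p" using assms pprime by blast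
      then show "(x, y) \<in> frac p c d" using assms y by (simp add: frac_mem)
    next
      assume "(x, y) \<in> frac p c d"
      then have y: "y \<notin> p" and h2: "c * y - d * x \<in> p" by (auto simp: frac_mem)
      have "d * (a * y - b * x) \<in> p"
        by (rule idl_lin[OF pidl h h2, of _ y b]) (simp add: algebra_simps)
      then have "a * y - b * x \<in> p" using assms pprime by blast
      then show "(x, y) \<in> frac p a b" using assms y by (simp add: frac_mem)
    qed
  qed
  then show "frac p a b = frac p c d" by (simp add: set_eq_iff)
qed

lemma qf_carrier: "carrier (qf_ring p) = {X. \<exists>a b. b \<notin> p \<and> X = frac p a b}"
  by (auto simp: qf_ring_def quotient_def frac_def)

lemma num_den: assumes "X \<in> carrier (qf_ring p)"
  shows "frac_den X \<notin> p \<and> X = frac p (frac_num X) (frac_den X)"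
proof -
  obtain a b where b: "b \<notin> p" and X: "X = frac p a b" using assms qf_carrier by auto
  have "(a, b) \<in> X" using X b pidl by (simp add: frac_mem idl_0)
  then have "(SOME x. x \<in> X) \<in> X" by (rule someI)
  then have "(frac_num X, frac_den X) \<in> X" by (simp add: frac_num_def frac_den_def)
  then have d: "frac_den X \<notin> p" and e: "a * frac_den X - b * frac_num X \<in> p"
    using X by (auto simp: frac_mem)
  show ?thesis using d e X b frac_eq by auto
qed

lemma frac_in_carrier: "b \<notin> p \<Longrightarrow> frac p a b \<in> carrier (qf_ring p)"
  using qf_carrier by auto

lemma mult_frac: assumes "b \<notin> p" "d \<notin> p"
  shows "monoid.mult (qf_ring p) (frac p a b) (frac p c d) = frac p (a * c) (b * d)"
proof -
  let ?X = "frac p a b" and ?Y = "frac p c d"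
  have X: "frac_den ?X \<notin> p" "?X = frac p (frac_num ?X) (frac_den ?X)"
    using num_den[OF frac_in_carrier[OF assms(1)]] by auto
  have Y: "frac_den ?Y \<notin> p" "?Y = frac p (frac_num ?Y) (frac_den ?Y)"
    using num_den[OF frac_in_carrier[OF assms(2)]] by auto
  have h1: "frac_num ?X * b - frac_den ?X * a \<in> p" using X assms frac_eq by metis
  have h2: "frac_num ?Y * d - frac_den ?Y * c \<in> p" using Y assms frac_eq by metis
  have "frac_num ?X * frac_num ?Y * (b * d) - frac_den ?X * frac_den ?Y * (a * c) \<in> p"
    by (rule idl_lin[OF pidl h1 h2, of _ "frac_num ?Y * d" "frac_den ?X * a"]) (simp add: algebra_simps)
  then show ?thesis
    using X Y assms frac_eq[of "frac_den ?X * frac_den ?Y" "b * d"] pmul_notin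
    by (simp add: qf_ring_def)
qed

lemma add_frac: assumes "b \<notin> p" "d \<notin> p"
  shows "add (qf_ring p) (frac p a b) (frac p c d) = frac p (a * d + c * b) (b * d)"
proof -
  let ?X = "frac p a b" and ?Y = "frac p c d"
  have X: "frac_den ?X \<notin> p" "?X = frac p (frac_num ?X) (frac_den ?X)"
    using num_den[OF frac_in_carrier[OF assms(1)]] by auto
  have Y: "frac_den ?Y \<notin> p" "?Y = frac p (frac_num ?Y) (frac_den ?Y)"
    using num_den[OF frac_in_carrier[OF assms(2)]] by auto
  have h1: "frac_num ?X * b - frac_den ?X * a \<in> p" using X assms frac_eq by metis
  have h2: "frac_num ?Y * d - frac_den ?Y * c \<in> p" using Y assms frac_eq by metis
  have "(frac_num ?X * frac_den ?Y + frac_num ?Y * frac_den ?X) * (b * d)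
        - frac_den ?X * frac_den ?Y * (a * d + c * b) \<in> p"
    by (rule idl_lin[OF pidl h1 h2, of _ "frac_den ?Y * d" "frac_den ?X * b"]) (simp add: algebra_simps)
  then show ?thesis
    using X Y assms frac_eq[of "frac_den ?X * frac_den ?Y" "b * d"] pmul_notin
    by (simp add: qf_ring_def)
qed

lemma frac_zero_iff: "d \<notin> p \<Longrightarrow> frac p n d = frac p 0 1 \<longleftrightarrow> n \<in> p"
  using frac_eq[of d 1 n 0] p1 by simp

lemma gf_reps:
  assumes S: "S \<subseteq> carrier (qf_ring p)"
    and gen: "generate_field (qf_ring p) ((\<lambda>k. frac p (iota k) 1) ` K \<union> S) = carrier (qf_ring p)"
    and sub: "subring_of B" and iK: "iota ` K \<subseteq> B"
    and reps: "\<forall>X\<in>S. \<exists>n d. (n, d) \<in> X \<and> n \<in> B \<and> d \<in> B"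
  shows "\<exists>n d. n \<in> B \<and> d \<in> B \<and> d \<notin> p \<and> a * d - n \<in> p"
proof -
  have B1: "1 \<in> B" and Badd: "\<And>x y. x \<in> B \<Longrightarrow> y \<in> B \<Longrightarrow> x + y \<in> B"
    and Bmul: "\<And>x y. x \<in> B \<Longrightarrow> y \<in> B \<Longrightarrow> x * y \<in> B"
    and Bneg: "\<And>x. x \<in> B \<Longrightarrow> - x \<in> B" using sub by (auto simp: subring_of_def)
  have ind: "\<exists>n d. n \<in> B \<and> d \<in> B \<and> d \<notin> p \<and> h = frac p n d"
    if "h \<in> generate_field (qf_ring p) ((\<lambda>k. frac p (iota k) 1) ` K \<union> S)" for h
    using that
  proof (induction rule: generate_field.induct)
    case one
    then show ?case using B1 p1 by (auto simp: qf_ring_def)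
  next
    case (incl h)
    then show ?case
    proof
      assume "h \<in> (\<lambda>k. frac p (iota k) 1) ` K"
      then show ?thesis using iK B1 p1 by auto
    next
      assume hS: "h \<in> S"
      then obtain n d where nd: "(n, d) \<in> h" "n \<in> B" "d \<in> B" using reps by blast
      obtain a b where b: "b \<notin> p" and h: "h = frac p a b" using hS S qf_carrier by auto
      have "d \<notin> p" "a * d - b * n \<in> p" using nd h by (auto simp: frac_mem)
      then show ?thesis using nd b h frac_eq by blast
    qed
  next
    case (a_inv h)
    then obtain n d where nd: "n \<in> B" "d \<in> B" "d \<notin> p" "h = frac p n d" by blast
    have "a_inv (qf_ring p) h = frac p (- n) d"
      unfolding a_inv_def m_inv_def
    proof (simp, rule the_equality)
      show "frac p (- n) d \<in> carrier (qf_ring p) \<and>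
        h \<oplus>\<^bsub>qf_ring p\<^esub> frac p (- n) d = \<zero>\<^bsub>qf_ring p\<^esub> \<and>
        frac p (- n) d \<oplus>\<^bsub>qf_ring p\<^esub> h = \<zero>\<^bsub>qf_ring p\<^esub>"
        using nd by (simp add: add_frac frac_in_carrier frac_zero_iff pmul_notin idl_0[OF pidl])
           (simp add: qf_ring_def frac_zero_iff pmul_notin idl_0[OF pidl])
    next
      fix y assume y: "y \<in> carrier (qf_ring p) \<and> h \<oplus>\<^bsub>qf_ring p\<^esub> y = \<zero>\<^bsub>qf_ring p\<^esub> \<and>
        y \<oplus>\<^bsub>qf_ring p\<^esub> h = \<zero>\<^bsub>qf_ring p\<^esub>"
      then have yy: "frac_den y \<notin> p" "y = frac p (frac_num y) (frac_den y)" using num_den by auto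
      have "frac p (n * frac_den y + frac_num y * d) (d * frac_den y) = frac p 0 1"
        using y yy nd add_frac[of d "frac_den y" n "frac_num y"] by (simp add: qf_ring_def)
      then have "n * frac_den y + frac_num y * d \<in> p"
        using frac_zero_iff pmul_notin nd yy by blast
      then have "frac_num y * d - frac_den y * (- n) \<in> p" by (simp add: algebra_simps)
      then show "y = frac p (- n) d" using yy nd frac_eq by metis
    qed
    then show ?case using nd Bneg by blast
  next
    case (m_inv h)
    then obtain n d where nd: "n \<in> B" "d \<in> B" "d \<notin> p" "h = frac p n d" by blast
    have n: "n \<notin> p" using m_inv(2) nd frac_zero_iff by (auto simp: qf_ring_def)
    have "m_inv (qf_ring p) h = frac p d n"
      unfolding m_inv_def
    proof (rule the_equality)
      show "frac p d n \<in> carrier (qf_ring p) \<and>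
        h \<otimes>\<^bsub>qf_ring p\<^esub> frac p d n = \<one>\<^bsub>qf_ring p\<^esub> \<and>
        frac p d n \<otimes>\<^bsub>qf_ring p\<^esub> h = \<one>\<^bsub>qf_ring p\<^esub>"
        using nd n frac_eq[of "n * d" 1 "n * d" 1] frac_eq[of "d * n" 1 "d * n" 1] p1 pmul_notin
        by (simp add: mult_frac frac_in_carrier) (simp add: qf_ring_def frac_eq algebra_simps idl_0[OF pidl])
    next
      fix y assume y: "y \<in> carrier (qf_ring p) \<and> h \<otimes>\<^bsub>qf_ring p\<^esub> y = \<one>\<^bsub>qf_ring p\<^esub> \<and>
        y \<otimes>\<^bsub>qf_ring p\<^esub> h = \<one>\<^bsub>qf_ring p\<^esub>"
      then have yy: "frac_den y \<notin> p" "y = frac p (frac_num y) (frac_den y)" using num_den by auto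
      have "frac p (n * frac_num y) (d * frac_den y) = frac p 1 1"
        using y yy nd mult_frac[of d "frac_den y" n "frac_num y"] by (simp add: qf_ring_def)
      then have "n * frac_num y - d * frac_den y \<in> p"
        using frac_eq[of "d * frac_den y" 1] pmul_notin nd yy p1 by simp
      then have "frac_num y * n - frac_den y * d \<in> p" by (simp add: algebra_simps)
      then show "y = frac p d n" using yy n frac_eq by metis
    qed
    then show ?case using nd n by blast
  next
    case (eng_add h1 h2)
    then obtain n1 d1 n2 d2 where nd: "n1 \<in> B" "d1 \<in> B" "d1 \<notin> p" "h1 = frac p n1 d1"
      "n2 \<in> B" "d2 \<in> B" "d2 \<notin> p" "h2 = frac p n2 d2" by blast
    then show ?case using add_frac Badd Bmul pmul_notin by metis
  next
    case (eng_mult h1 h2)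
    then obtain n1 d1 n2 d2 where nd: "n1 \<in> B" "d1 \<in> B" "d1 \<notin> p" "h1 = frac p n1 d1"
      "n2 \<in> B" "d2 \<in> B" "d2 \<notin> p" "h2 = frac p n2 d2" by blast
    then show ?case using mult_frac Bmul pmul_notin by metis
  qed
  have "frac p a 1 \<in> carrier (qf_ring p)" using frac_in_carrier p1 by blast
  then obtain n d where nd: "n \<in> B" "d \<in> B" "d \<notin> p" "frac p a 1 = frac p n d"
    using ind gen by blast
  then have "a * d - 1 * n \<in> p" using frac_eq p1 by blast
  then show ?thesis using nd by auto
qed

end



lemma idl_add: "idl I \<Longrightarrow> x \<in> I \<Longrightarrow> y \<in> I \<Longrightarrow> x + y \<in> I"
  unfolding idl_def by blast

lemma idl_mulI: "idl I \<Longrightarrow> x \<in> I \<Longrightarrow> b * x \<in> I"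
  unfolding idl_def by blast

lemma max_avoid_prime:
  fixes x :: "'a::comm_ring_1"
  assumes nz: "\<forall>n. x ^ n \<noteq> 0"
  shows "\<exists>M. prime_ideal_in UNIV M \<and> x \<notin> M"
proof -
  let ?A = "{I::'a set. idl I \<and> (\<forall>n. x ^ n \<notin> I)}"
  have "\<forall>C\<in>chains ?A. \<exists>U\<in>?A. \<forall>X\<in>C. X \<subseteq> U"
  proof
    fix C assume C: "C \<in> chains ?A"
    show "\<exists>U\<in>?A. \<forall>X\<in>C. X \<subseteq> U"
    proof (cases "C = {}")
      case True
      have "{0} \<in> ?A" using nz by (auto simp: idl_def)
      then show ?thesis using True by blast
    next
      case False
      have CA: "C \<subseteq> ?A" and ch: "\<forall>X\<in>C. \<forall>Y\<in>C. X \<subseteq> Y \<or> Y \<subseteq> X"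
        using C by (auto simp: chains_def chain_subset_def)
      have "idl (\<Union>C)" unfolding idl_def
      proof (intro conjI ballI allI impI)
        show "0 \<in> \<Union>C" using False CA by (auto simp: idl_def)
      next
        fix a b assume "a \<in> \<Union>C" "b \<in> \<Union>C"
        then obtain X Y where XY: "X \<in> C" "Y \<in> C" "a \<in> X" "b \<in> Y" by blast
        have iX: "idl X" and iY: "idl Y" using XY CA by auto
        from ch XY have "X \<subseteq> Y \<or> Y \<subseteq> X" by blast
        then show "a + b \<in> \<Union>C"
        proof
          assume "X \<subseteq> Y"
          then have "a + b \<in> Y" using idl_add[OF iY] XY by blast
          then show ?thesis using XY by blast
        next
          assume "Y \<subseteq> X"
          then have "a + b \<in> X" using idl_add[OF iX] XY by blast
          then show ?thesis using XY by blast
        qed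
      next
        fix b a assume "a \<in> \<Union>C"
        then obtain X where X: "X \<in> C" "a \<in> X" by blast
        then have "idl X" using CA by auto
        then have "b * a \<in> X" using idl_mulI X by blast
        then show "b * a \<in> \<Union>C" using X by blast
      qed
      moreover have "\<forall>n. x ^ n \<notin> \<Union>C" using CA by blast
      ultimately show ?thesis by blast
    qed
  qed
  then obtain M where M: "M \<in> ?A" and Mmax: "\<forall>X\<in>?A. M \<subseteq> X \<longrightarrow> X = M"
    by (rule Zorn_Lemma2[THEN bexE]) blast
  have Mi: "idl M" and Mx: "\<forall>n. x ^ n \<notin> M" using M by auto
  have key: "\<exists>m i r. i \<in> M \<and> x ^ m = i + r * a" if a: "a \<notin> M" for a
  proof (rule ccontr)
    assume nex: "\<not> ?thesis"
    let ?I = "{i + r * a | i r. i \<in> M}"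
    have "idl ?I" unfolding idl_def
    proof (intro conjI ballI allI impI)
      have "(0::'a) = 0 + 0 * a \<and> (0::'a) \<in> M" using idl_0[OF Mi] by simp
      then show "0 \<in> ?I" by blast
    next
      fix u v assume "u \<in> ?I" "v \<in> ?I"
      then obtain i r j s where "u = i + r * a" "v = j + s * a" "i \<in> M" "j \<in> M" by blast
      then have "u + v = (i + j) + (r + s) * a \<and> i + j \<in> M" using idl_add[OF Mi]
        by (simp add: algebra_simps)
      then show "u + v \<in> ?I" by blast
    next
      fix b u assume "u \<in> ?I"
      then obtain i r where "u = i + r * a" "i \<in> M" by blast
      then have "b * u = (b * i) + (b * r) * a \<and> b * i \<in> M" using idl_mulI[OF Mi, of i b]
        by (simp add: distrib_left mult.assoc)
      then show "b * u \<in> ?I" by blast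
    qed
    moreover have "\<forall>n. x ^ n \<notin> ?I" using nex by blast
    moreover have "M \<subseteq> ?I"
    proof
      fix i assume "i \<in> M"
      then have "i = i + 0 * a \<and> i \<in> M" by simp
      then show "i \<in> ?I" by blast
    qed
    ultimately have "?I = M" using Mmax by blast
    moreover have "a = 0 + 1 * a \<and> (0::'a) \<in> M" using idl_0[OF Mi] by simp
    then have "a \<in> ?I" by blast
    ultimately show False using a by blast
  qed
  have "prime_ideal_in UNIV M"
    unfolding prime_UNIV_iff
  proof (intro conjI allI impI)
    show "idl M" by fact
    show "1 \<notin> M" using Mx[rule_format, of 0] by simp
  next
    fix a b assume ab: "a * b \<in> M"
    show "a \<in> M \<or> b \<in> M"
    proof (rule ccontr)
      assume "\<not> (a \<in> M \<or> b \<in> M)"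
      then obtain m i r n j s where "i \<in> M" "x ^ m = i + r * a" "j \<in> M" "x ^ n = j + s * b"
        using key by meson
      then have "x ^ (m + n) = (i + r * a) * j + i * (s * b) + (r * s) * (a * b)"
        by (simp add: power_add algebra_simps)
      moreover have "(i + r * a) * j + i * (s * b) + (r * s) * (a * b) \<in> M"
        using idl_add[OF Mi] idl_mulI[OF Mi] \<open>i \<in> M\<close> \<open>j \<in> M\<close> ab by (simp add: mult.commute[of i])
      ultimately have "x ^ (m + n) \<in> M" by simp
      then show False using Mx by blast
    qed
  qed
  moreover have "x \<notin> M" using Mx[rule_format, of 1] by simp
  ultimately show ?thesis by blast
qed

lemma minimal_below:
  fixes M :: "'a::comm_ring_1 set"
  assumes M: "prime_ideal_in UNIV M"
  shows "\<exists>P. minimal_prime_in UNIV P \<and> P \<subseteq> M"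
proof -
  let ?A = "uminus ` {J::'a set. prime_ideal_in UNIV J \<and> J \<subseteq> M}"
  have "\<forall>C\<in>chains ?A. \<exists>U\<in>?A. \<forall>X\<in>C. X \<subseteq> U"
  proof
    fix C assume C: "C \<in> chains ?A"
    show "\<exists>U\<in>?A. \<forall>X\<in>C. X \<subseteq> U"
    proof (cases "C = {}")
      case True
      then show ?thesis using M by blast
    next
      case False
      have CA: "C \<subseteq> ?A" and ch: "\<forall>X\<in>C. \<forall>Y\<in>C. X \<subseteq> Y \<or> Y \<subseteq> X"
        using C by (auto simp: chains_def chain_subset_def)
      let ?D = "uminus ` C"
      have Dp: "\<forall>J\<in>?D. prime_ideal_in UNIV J \<and> J \<subseteq> M" using CA by auto
      have Dch: "\<forall>X\<in>?D. \<forall>Y\<in>?D. X \<subseteq> Y \<or> Y \<subseteq> X" using ch by auto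
      have Dne: "?D \<noteq> {}" using False by blast
      have "prime_ideal_in UNIV (\<Inter>?D)"
        unfolding prime_UNIV_iff
      proof (intro conjI allI impI)
        have iD: "\<forall>J\<in>?D. idl J" using Dp by (simp add: prime_UNIV_iff)
        show "idl (\<Inter>?D)" unfolding idl_def
        proof (intro conjI ballI allI impI)
          show "0 \<in> \<Inter>?D" using iD idl_0 by blast
          show "x + y \<in> \<Inter>?D" if "x \<in> \<Inter>?D" "y \<in> \<Inter>?D" for x y
            using iD idl_add that by blast
          show "b * x \<in> \<Inter>?D" if "x \<in> \<Inter>?D" for b x
            using iD idl_mulI that by blast
        qed
        obtain J where "J \<in> ?D" using Dne by blast
        then have "prime_ideal_in UNIV J" using Dp by blast
        then have "1 \<notin> J" by (simp add: prime_UNIV_iff)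
        then show "1 \<notin> \<Inter>?D" using \<open>J \<in> ?D\<close> by blast
      next
        fix a b assume ab: "a * b \<in> \<Inter>?D"
        show "a \<in> \<Inter>?D \<or> b \<in> \<Inter>?D"
        proof (rule ccontr)
          assume "\<not> ?thesis"
          then obtain J1 J2 where J: "J1 \<in> ?D" "J2 \<in> ?D" "a \<notin> J1" "b \<notin> J2" by blast
          then have "J1 \<subseteq> J2 \<or> J2 \<subseteq> J1" using Dch by blast
          then show False
          proof
            assume "J1 \<subseteq> J2"
            have "prime_ideal_in UNIV J1" using J Dp by blast
            then have pr: "\<forall>a b. a * b \<in> J1 \<longrightarrow> a \<in> J1 \<or> b \<in> J1" by (simp add: prime_UNIV_iff)
            have "a * b \<in> J1" using ab J by blast
            then show False using pr J \<open>J1 \<subseteq> J2\<close> by blast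
          next
            assume "J2 \<subseteq> J1"
            have "prime_ideal_in UNIV J2" using J Dp by blast
            then have pr: "\<forall>a b. a * b \<in> J2 \<longrightarrow> a \<in> J2 \<or> b \<in> J2" by (simp add: prime_UNIV_iff)
            have "a * b \<in> J2" using ab J by blast
            then show False using pr J \<open>J2 \<subseteq> J1\<close> by blast
          qed
        qed
      qed
      moreover have "\<Inter>?D \<subseteq> M" using Dp Dne by blast
      ultimately have "- \<Inter>?D \<in> ?A" by blast
      moreover have "\<forall>X\<in>C. X \<subseteq> - \<Inter>?D" by auto
      ultimately show ?thesis by blast
    qed
  qed
  then obtain U where U: "U \<in> ?A" and Umax: "\<forall>X\<in>?A. U \<subseteq> X \<longrightarrow> X = U"
    by (rule Zorn_Lemma2[THEN bexE]) blast
  obtain P where P: "prime_ideal_in UNIV P" "P \<subseteq> M" "U = - P" using U by blast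
  have "minimal_prime_in UNIV P"
    unfolding minimal_prime_in_def
  proof (intro conjI allI impI)
    show "prime_ideal_in UNIV P" by fact
  next
    fix J assume J: "prime_ideal_in UNIV J \<and> J \<subseteq> P"
    then have "- J \<in> ?A" using P by blast
    moreover have "U \<subseteq> - J" using J P by auto
    ultimately have "- J = - P" using Umax P by blast
    then show "J = P" by simp
  qed
  then show ?thesis using P by blast
qed

lemma nilrad_zero:
  fixes x :: "'a::comm_ring_1"
  assumes red: "reduced TYPE('a)" and all: "\<forall>P. minimal_prime_in UNIV P \<longrightarrow> x \<in> P"
  shows "x = 0"
proof (rule ccontr)
  assume "x \<noteq> 0"
  then have "\<forall>n. x ^ n \<noteq> 0" using red by (auto simp: reduced_def)
  then obtain M where "prime_ideal_in UNIV M" "x \<notin> M" using max_avoid_prime by blast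
  then obtain P where "minimal_prime_in UNIV P" "P \<subseteq> M" using minimal_below by blast
  then show False using all \<open>x \<notin> M\<close> by blast
qed




lemma um_iff: "(x::'a::comm_ring_1) \<in> uminus ` P \<longleftrightarrow> - x \<in> P"
  by (metis image_iff minus_minus)

lemma gen_props:
  shows "K_subalgebra K iota (K_subalg_gen K iota G)" and "G \<subseteq> K_subalg_gen K iota G"
    and "K_subalgebra K iota B \<Longrightarrow> G \<subseteq> B \<Longrightarrow> K_subalg_gen K iota G \<subseteq> B"
proof -
  let ?F = "{B. K_subalgebra K iota B \<and> G \<subseteq> B}"
  have eq: "K_subalg_gen K iota G = \<Inter>?F" by (simp add: K_subalg_gen_def)
  have sF: "subring_of B \<and> iota ` K \<subseteq> B \<and> G \<subseteq> B" if "B \<in> ?F" for B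
    using that by (simp add: K_subalgebra_def)
  have "1 \<in> \<Inter>?F"
  proof (rule InterI)
    fix B assume B: "B \<in> ?F"
    have "subring_of B" using sF[OF B] by blast
    then show "1 \<in> B" unfolding subring_of_def by blast
  qed
  moreover have "x + y \<in> \<Inter>?F \<and> x * y \<in> \<Inter>?F" if "x \<in> \<Inter>?F" "y \<in> \<Inter>?F" for x y
  proof (intro conjI InterI)
    fix B assume B: "B \<in> ?F"
    then have "x \<in> B" "y \<in> B" using that by blast+
    moreover have "subring_of B" using sF[OF B] by blast
    ultimately show "x + y \<in> B" "x * y \<in> B" unfolding subring_of_def by blast+
  qed
  moreover have "- x \<in> \<Inter>?F" if "x \<in> \<Inter>?F" for x
  proof (rule InterI)
    fix B assume B: "B \<in> ?F"
    then have "x \<in> B" using that by blast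
    moreover have "subring_of B" using sF[OF B] by blast
    ultimately show "- x \<in> B" unfolding subring_of_def by blast
  qed
  moreover have "iota ` K \<subseteq> \<Inter>?F"
  proof
    fix z assume z: "z \<in> iota ` K"
    show "z \<in> \<Inter>?F"
    proof (rule InterI)
      fix B assume B: "B \<in> ?F"
      show "z \<in> B" using sF[OF B] z by blast
    qed
  qed
  ultimately show "K_subalgebra K iota (K_subalg_gen K iota G)"
    unfolding eq K_subalgebra_def subring_of_def by blast
  show "G \<subseteq> K_subalg_gen K iota G" unfolding eq by blast
  show "K_subalgebra K iota B \<Longrightarrow> G \<subseteq> B \<Longrightarrow> K_subalg_gen K iota G \<subseteq> B"
    unfolding eq by blast
qed

lemma prime_restrict:
  assumes "prime_ideal_in UNIV p" "subring_of B"
  shows "prime_ideal_in B (p \<inter> B)"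
proof -
  have i: "idl p" and p1: "1 \<notin> p" and pr: "\<forall>a b. a * b \<in> p \<longrightarrow> a \<in> p \<or> b \<in> p"
    using assms(1) by (auto simp: prime_UNIV_iff)
  have B1: "1 \<in> B" and Badd: "\<forall>x\<in>B. \<forall>y\<in>B. x + y \<in> B \<and> x * y \<in> B" and Bneg: "\<forall>x\<in>B. - x \<in> B"
    using assms(2) by (auto simp: subring_of_def)
  have "1 + - 1 \<in> B" using B1 Bneg Badd by blast
  then have B0: "0 \<in> B" by simp
  show ?thesis unfolding prime_ideal_in_def
  proof (intro conjI ballI impI)
    show "p \<inter> B \<subseteq> B" by blast
    show "0 \<in> p \<inter> B" using B0 idl_0[OF i] by blast
    show "x + y \<in> p \<inter> B" if "x \<in> p \<inter> B" "y \<in> p \<inter> B" for x y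
      using that idl_add[OF i] Badd by blast
    show "b * x \<in> p \<inter> B" if "b \<in> B" "x \<in> p \<inter> B" for b x
      using that idl_mulI[OF i] Badd by blast
    show "p \<inter> B \<noteq> B" using B1 p1 by blast
    show "a \<in> p \<inter> B \<or> b \<in> p \<inter> B" if "a \<in> B" "b \<in> B" "a * b \<in> p \<inter> B" for a b
      using that pr by blast
  qed
qed

lemma prod_notin_prime:
  assumes fin: "finite A" and pr: "prime_ideal_in B I" and sub: "subring_of B"
    and f: "\<forall>i\<in>A. f i \<in> B \<and> f i \<notin> I"
  shows "prod f A \<in> B \<and> prod f A \<notin> I"
  using fin f
proof (induction A rule: finite_induct)
  case empty
  have "1 \<in> B" using sub by (simp add: subring_of_def)
  moreover have "1 \<notin> I"
  proof
    assume i1: "1 \<in> I"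
    have m: "\<forall>b\<in>B. \<forall>x\<in>I. b * x \<in> I" and ne: "I \<noteq> B" and sb: "I \<subseteq> B"
      using pr unfolding prime_ideal_in_def by simp_all
    have "B \<subseteq> I"
    proof
      fix b assume "b \<in> B"
      then have "b * 1 \<in> I" using m i1 by blast
      then show "b \<in> I" by simp
    qed
    then show False using ne sb by blast
  qed
  ultimately show ?case by simp
next
  case (insert x F)
  then have a: "f x \<in> B" "f x \<notin> I" "prod f F \<in> B" "prod f F \<notin> I" by auto
  then have "f x * prod f F \<in> B" using sub by (simp add: subring_of_def)
  moreover have "\<forall>a\<in>B. \<forall>b\<in>B. a * b \<in> I \<longrightarrow> a \<in> I \<or> b \<in> I"
    using pr unfolding prime_ideal_in_def by simp
  then have "f x * prod f F \<notin> I" using a by blast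
  ultimately show ?case using insert by simp
qed

lemma prod_in_idl:
  assumes "finite A" "x \<in> A" "f x \<in> I" "idl I"
  shows "prod f A \<in> I"
proof -
  have e: "prod f A = f x * prod f (A - {x})" by (rule prod.remove[OF assms(1) assms(2)])
  have "prod f (A - {x}) * f x \<in> I" by (rule idl_mulI[OF assms(4) assms(3)])
  then show ?thesis unfolding e by (simp only: mult.commute)
qed

lemma minp_prime: "minimal_prime_in UNIV p \<Longrightarrow> prime_ideal_in UNIV p"
  by (simp add: minimal_prime_in_def)

lemma separating:
  assumes fin: "finite MP" and MPd: "MP = {p::'a::comm_ring_1 set. minimal_prime_in UNIV p}" and p: "p \<in> MP"
  shows "\<exists>e. e \<notin> p \<and> (\<forall>p'\<in>MP. p' \<noteq> p \<longrightarrow> e \<in> p')"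
proof -
  have ex: "\<exists>y. y \<in> p' \<and> y \<notin> p" if "p' \<in> MP" "p' \<noteq> p" for p'
  proof (rule ccontr)
    assume "\<not> ?thesis"
    then have "p' \<subseteq> p" by blast
    moreover have "prime_ideal_in UNIV p'" using that MPd minp_prime by blast
    moreover have "\<forall>J. prime_ideal_in UNIV J \<and> J \<subseteq> p \<longrightarrow> J = p"
      using p MPd unfolding minimal_prime_in_def by blast
    ultimately have "p' = p" by blast
    then show False using that by blast
  qed
  define y where "y p' = (SOME y. y \<in> p' \<and> y \<notin> p)" for p'
  have y: "y p' \<in> p' \<and> y p' \<notin> p" if "p' \<in> MP" "p' \<noteq> p" for p'
    using someI_ex[OF ex[OF that]] unfolding y_def by blast
  have pp: "prime_ideal_in UNIV p" using p MPd minp_prime by blast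
  have "prod y (MP - {p}) \<in> UNIV \<and> prod y (MP - {p}) \<notin> p"
  proof (rule prod_notin_prime[OF _ pp])
    show "finite (MP - {p})" using fin by simp
    show "subring_of (UNIV::'a set)" by (simp add: subring_of_def)
    show "\<forall>i\<in>MP - {p}. y i \<in> UNIV \<and> y i \<notin> p" using y by blast
  qed
  moreover have "prod y (MP - {p}) \<in> p'" if "p' \<in> MP" "p' \<noteq> p" for p'
  proof (rule prod_in_idl)
    show "finite (MP - {p})" using fin by simp
    show "p' \<in> MP - {p}" using that by simp
    show "y p' \<in> p'" using y that by blast
    show "idl p'" using that MPd minp_prime prime_UNIV_iff by blast
  qed
  ultimately show ?thesis by blast
qed




lemma core:
  fixes K :: "real set" and iota :: "real \<Rightarrow> 'a::comm_ring_1" and T :: "'a set"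
  assumes pre: "preordering T" and ff: "ff_algebra K iota"
    and aa: "almost_archimedean (UNIV :: 'a set) T" and red: "reduced TYPE('a)"
    and finF: "finite F"
  shows "\<exists>B. fg_K_subalgebra K iota B \<and> almost_archimedean B (T \<inter> B) \<and> F \<subseteq> B"
proof -
  define MP where "MP = {p::'a set. minimal_prime_in UNIV p}"
  have finMP: "finite MP" using ff by (simp add: ff_algebra_def MP_def)
  have fgp: "fg_field_ext K iota p" if "p \<in> MP" for p using ff that by (simp add: ff_algebra_def MP_def)
  have primeMP: "prime_ideal_in UNIV p" if "p \<in> MP" for p using that minp_prime by (simp add: MP_def)
  have idlMP: "idl p" if "p \<in> MP" for p using primeMP[OF that] by (simp add: prime_UNIV_iff)
  have nil: "x = 0" if "\<forall>p\<in>MP. x \<in> p" for x :: 'a using nilrad_zero[OF red] that by (simp add: MP_def)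
  have preT: "\<And>x y. x \<in> T \<Longrightarrow> y \<in> T \<Longrightarrow> x * y \<in> T" and sqT: "\<And>a. a ^ 2 \<in> T"
    using pre by (auto simp: preordering_def)
  have exG: "\<exists>Gp. finite Gp \<and> (\<exists>S. S \<subseteq> carrier (qf_ring p) \<and>
      generate_field (qf_ring p) ((\<lambda>k. frac p (iota k) 1) ` K \<union> S) = carrier (qf_ring p) \<and>
      (\<forall>X\<in>S. \<exists>n d. (n, d) \<in> X \<and> n \<in> Gp \<and> d \<in> Gp))" if pM: "p \<in> MP" for p
  proof -
    obtain S where S: "finite S" "S \<subseteq> carrier (qf_ring p)"
      "generate_field (qf_ring p) ((\<lambda>k. frac p (iota k) 1) ` K \<union> S) = carrier (qf_ring p)"
      using fgp[OF pM] unfolding fg_field_ext_def by blast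
    let ?Gp = "frac_num ` S \<union> frac_den ` S"
    have "\<forall>X\<in>S. \<exists>n d. (n, d) \<in> X \<and> n \<in> ?Gp \<and> d \<in> ?Gp"
    proof
      fix X assume X: "X \<in> S"
      then have c: "X \<in> carrier (qf_ring p)" using S by blast
      have nd: "frac_den X \<notin> p \<and> X = frac p (frac_num X) (frac_den X)"
        by (rule num_den[OF primeMP[OF pM] c])
      have "frac_num X * frac_den X - frac_den X * frac_num X \<in> p"
        using idl_0[OF idlMP[OF pM]] by (simp add: mult.commute)
      then have "(frac_num X, frac_den X) \<in> frac p (frac_num X) (frac_den X)"
        using nd frac_mem[OF primeMP[OF pM]] by blast
      then have "(frac_num X, frac_den X) \<in> X" using nd by simp
      moreover have "frac_num X \<in> ?Gp" "frac_den X \<in> ?Gp" using X by blast+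
      ultimately show "\<exists>n d. (n, d) \<in> X \<and> n \<in> ?Gp \<and> d \<in> ?Gp" by blast
    qed
    moreover have "finite ?Gp" using S by simp
    ultimately show ?thesis using S by blast
  qed
  have "\<exists>g. \<forall>p\<in>MP. finite (g p) \<and> (\<exists>S. S \<subseteq> carrier (qf_ring p) \<and>
      generate_field (qf_ring p) ((\<lambda>k. frac p (iota k) 1) ` K \<union> S) = carrier (qf_ring p) \<and>
      (\<forall>X\<in>S. \<exists>n d. (n, d) \<in> X \<and> n \<in> g p \<and> d \<in> g p))"
    by (rule bchoice) (use exG in blast)
  then obtain g where g: "\<forall>p\<in>MP. finite (g p) \<and> (\<exists>S. S \<subseteq> carrier (qf_ring p) \<and>
      generate_field (qf_ring p) ((\<lambda>k. frac p (iota k) 1) ` K \<union> S) = carrier (qf_ring p) \<and>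
      (\<forall>X\<in>S. \<exists>n d. (n, d) \<in> X \<and> n \<in> g p \<and> d \<in> g p))" by blast
  have "\<exists>ef. \<forall>p\<in>MP. ef p \<notin> p \<and> (\<forall>p'\<in>MP. p' \<noteq> p \<longrightarrow> ef p \<in> p')"
    by (rule bchoice) (use separating[OF finMP MP_def] in blast)
  then obtain ef where ef: "\<forall>p\<in>MP. ef p \<notin> p \<and> (\<forall>p'\<in>MP. p' \<noteq> p \<longrightarrow> ef p \<in> p')" by blast
  define G where "G = F \<union> \<Union>(g ` MP) \<union> ef ` MP"
  have finG: "finite G" unfolding G_def using finF finMP g by simp
  define B where "B = K_subalg_gen K iota G"
  have KB: "K_subalgebra K iota B" unfolding B_def by (rule gen_props(1))
  have GB: "G \<subseteq> B" unfolding B_def by (rule gen_props(2))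
  have sub: "subring_of B" and iK: "iota ` K \<subseteq> B" using KB by (simp_all add: K_subalgebra_def)
  have B1: "1 \<in> B" and Badd: "\<And>x y. x \<in> B \<Longrightarrow> y \<in> B \<Longrightarrow> x + y \<in> B"
    and Bmul: "\<And>x y. x \<in> B \<Longrightarrow> y \<in> B \<Longrightarrow> x * y \<in> B"
    and Bneg: "\<And>x. x \<in> B \<Longrightarrow> - x \<in> B" using sub unfolding subring_of_def by blast+
  have B0: "0 \<in> B" using Badd[OF B1 Bneg[OF B1]] by simp
  have Bnat: "of_nat n \<in> B" for n
  proof (induction n)
    case 0 then show ?case using B0 by simp
  next
    case (Suc n) then show ?case using Badd[OF B1 Suc] by simp
  qed
  have Fr: "\<exists>d. d \<in> B \<and> d \<notin> p \<and> a * d \<in> B" if pM: "p \<in> MP" for p a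
  proof -
    obtain S where S: "S \<subseteq> carrier (qf_ring p)"
      "generate_field (qf_ring p) ((\<lambda>k. frac p (iota k) 1) ` K \<union> S) = carrier (qf_ring p)"
      "\<forall>X\<in>S. \<exists>n d. (n, d) \<in> X \<and> n \<in> g p \<and> d \<in> g p" using g pM by blast
    have "g p \<subseteq> B" using GB pM unfolding G_def by blast
    then have reps: "\<forall>X\<in>S. \<exists>n d. (n, d) \<in> X \<and> n \<in> B \<and> d \<in> B" using S(3) by blast
    obtain n d where nd: "n \<in> B" "d \<in> B" "d \<notin> p" "a * d - n \<in> p"
      using gf_reps[OF primeMP[OF pM] S(1) S(2) sub iK reps] by blast
    let ?e = "ef p"
    have e: "?e \<notin> p" "\<forall>p'\<in>MP. p' \<noteq> p \<longrightarrow> ?e \<in> p'" using ef pM by auto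
    have eB: "?e \<in> B" using GB pM unfolding G_def by blast
    have "\<forall>p'\<in>MP. ?e * (a * d - n) \<in> p'"
    proof
      fix p' assume p': "p' \<in> MP"
      show "?e * (a * d - n) \<in> p'"
      proof (cases "p' = p")
        case True
        then show ?thesis using idl_mulI[OF idlMP[OF pM] nd(4)] by simp
      next
        case False
        then have "?e \<in> p'" using e p' by blast
        then have "(a * d - n) * ?e \<in> p'" by (rule idl_mulI[OF idlMP[OF p']])
        then show ?thesis by (simp only: mult.commute)
      qed
    qed
    then have "?e * (a * d - n) = 0" by (rule nil)
    then have "a * (?e * d) = ?e * n" by (simp add: algebra_simps)
    moreover have "?e * n \<in> B" using Bmul[OF eB nd(1)] .
    moreover have "?e * d \<in> B" using Bmul[OF eB nd(2)] .
    moreover have "?e * d \<notin> p" using pmul_notin[OF primeMP[OF pM] e(1) nd(3)] .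
    ultimately show ?thesis by metis
  qed
  have "almost_archimedean B (T \<inter> B)"
    unfolding almost_archimedean_def
  proof (intro ballI impI)
    fix P assume Ps: "P \<in> sper B (T \<inter> B)" and qmin: "minimal_prime_in B (P \<inter> uminus ` P)"
    define q where "q = P \<inter> uminus ` P"
    have PB: "P \<subseteq> B" and Padd: "\<And>x y. x \<in> P \<Longrightarrow> y \<in> P \<Longrightarrow> x + y \<in> P"
      and Pmul: "\<And>x y. x \<in> P \<Longrightarrow> y \<in> P \<Longrightarrow> x * y \<in> P"
      and Ptot: "P \<union> uminus ` P = B" and qprime: "prime_ideal_in B q" and TP: "T \<inter> B \<subseteq> P"
      using Ps unfolding sper_def ordering_of_def q_def by blast+
    have minq: "\<forall>J. prime_ideal_in B J \<and> J \<subseteq> q \<longrightarrow> J = q"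
      using qmin unfolding minimal_prime_in_def q_def by blast
    have qiff: "x \<in> q \<longleftrightarrow> x \<in> P \<and> - x \<in> P" for x unfolding q_def using um_iff by blast
    have Ptot': "x \<in> B \<Longrightarrow> x \<notin> P \<Longrightarrow> - x \<in> P" for x using Ptot um_iff by blast
    have sq: "b * b \<in> P" if "b \<in> B" for b
    proof -
      have "b * b \<in> T" using sqT[of b] by (simp add: power2_eq_square)
      then show ?thesis using TP Bmul[OF that that] by blast
    qed
    have q0: "0 \<in> q" using qprime unfolding prime_ideal_in_def by blast
    have "\<exists>p\<in>MP. p \<inter> B \<subseteq> q"
    proof (rule ccontr)
      assume "\<not> ?thesis"
      then have "\<forall>p\<in>MP. \<exists>x. x \<in> p \<inter> B \<and> x \<notin> q" by blast
      then have "\<exists>xf. \<forall>p\<in>MP. xf p \<in> p \<inter> B \<and> xf p \<notin> q" by (rule bchoice)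
      then obtain xf where xf: "\<forall>p\<in>MP. xf p \<in> p \<inter> B \<and> xf p \<notin> q" by blast
      have "prod xf MP \<in> B \<and> prod xf MP \<notin> q"
        by (rule prod_notin_prime[OF finMP qprime sub]) (use xf in blast)
      moreover have "\<forall>p\<in>MP. prod xf MP \<in> p"
      proof
        fix p assume p: "p \<in> MP"
        show "prod xf MP \<in> p" by (rule prod_in_idl[OF finMP p _ idlMP[OF p]]) (use xf p in blast)
      qed
      then have "prod xf MP = 0" by (rule nil)
      ultimately show False using q0 by simp
    qed
    then obtain p where pM: "p \<in> MP" and pq: "p \<inter> B \<subseteq> q" by blast
    have "prime_ideal_in B (p \<inter> B)" by (rule prime_restrict[OF primeMP[OF pM] sub])
    then have qp: "q = p \<inter> B" using minq pq by blast
    have pp: "prime_ideal_in UNIV p" using primeMP[OF pM] .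
    have pidl: "idl p" using idlMP[OF pM] .
    have pprime: "\<And>a b. a * b \<in> p \<Longrightarrow> a \<in> p \<or> b \<in> p" using pp by (simp add: prime_UNIV_iff)
    have pnot: "\<And>a b. a \<notin> p \<Longrightarrow> b \<notin> p \<Longrightarrow> a * b \<notin> p" using pprime by blast
    have Frp: "\<exists>d. d \<in> B \<and> d \<notin> p \<and> a * d \<in> B" for a using Fr[OF pM] .
    have wd: "a * d' * d' \<in> P" if "d \<in> B" "d \<notin> p" "a * d \<in> B" "d' \<in> B" "d' \<notin> p"
      "a * d' \<in> B" "a * d * d \<in> P" for a d d'
    proof (rule ccontr)
      assume nP: "a * d' * d' \<notin> P"
      have "a * d' * d' \<in> B" using Bmul that by blast
      then have m: "- (a * d' * d') \<in> P" using Ptot' nP by blast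
      have z1: "(a * d * d) * (d' * d') \<in> P" using Pmul[OF that(7) sq[OF that(4)]] .
      have "- (a * d' * d') * (d * d) \<in> P" using Pmul[OF m sq[OF that(1)]] .
      then have z2: "- ((a * d * d) * (d' * d')) \<in> P" by (simp add: algebra_simps)
      have "(a * d * d) * (d' * d') \<in> q" using qiff z1 z2 by blast
      then have "a * (d * d * (d' * d')) \<in> p" using qp by (simp add: algebra_simps)
      moreover have "d * d * (d' * d') \<notin> p" using pnot that(2) that(5) by blast
      ultimately have "a \<in> p" using pprime by blast
      then have "(d' * d') * a \<in> p" by (rule idl_mulI[OF pidl])
      then have "a * d' * d' \<in> p" by (simp add: algebra_simps)
      then have "a * d' * d' \<in> q" using qp \<open>a * d' * d' \<in> B\<close> by blast
      then show False using qiff nP by blast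
    qed
    define Q where "Q = {a. \<exists>d. d \<in> B \<and> d \<notin> p \<and> a * d \<in> B \<and> a * d * d \<in> P}"
    have Qall: "a * d * d \<in> P" if aQ: "a \<in> Q" and hd: "d \<in> B" "d \<notin> p" "a * d \<in> B" for a d
    proof -
      obtain d0 where d0: "d0 \<in> B" "d0 \<notin> p" "a * d0 \<in> B" "a * d0 * d0 \<in> P" using aQ Q_def by blast
      show ?thesis by (rule wd[OF d0(1-3) hd d0(4)])
    qed
    have QI: "a \<in> Q" if "d \<in> B" "d \<notin> p" "a * d \<in> B" "a * d * d \<in> P" for a d
      using that unfolding Q_def by blast
    have Qp: "Q \<inter> uminus ` Q = p"
    proof (intro equalityI subsetI)
      fix a assume "a \<in> Q \<inter> uminus ` Q"
      then have aQ: "a \<in> Q" and naQ: "- a \<in> Q" using um_iff by blast+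
      obtain d where d: "d \<in> B" "d \<notin> p" "a * d \<in> B" using Frp by blast
      have "a * d * d \<in> P" using Qall[OF aQ d] .
      moreover have "(- a) * d \<in> B" using Bneg[OF d(3)] by simp
      then have "(- a) * d * d \<in> P" using Qall[OF naQ d(1) d(2)] by blast
      then have "- (a * d * d) \<in> P" by simp
      ultimately have "a * d * d \<in> q" using qiff by blast
      then have "a * (d * d) \<in> p" using qp by (simp add: mult.assoc)
      then show "a \<in> p" using pprime pnot d(2) by blast
    next
      fix a assume ap: "a \<in> p"
      obtain d where d: "d \<in> B" "d \<notin> p" "a * d \<in> B" using Frp by blast
      have "(d * d) * a \<in> p" by (rule idl_mulI[OF pidl ap])
      then have "a * d * d \<in> p" by (simp add: algebra_simps)
      moreover have "a * d * d \<in> B" using Bmul d by blast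
      ultimately have "a * d * d \<in> q" using qp by blast
      then have h1: "a * d * d \<in> P" and h2: "- (a * d * d) \<in> P" using qiff by blast+
      have "a \<in> Q" by (rule QI[OF d h1])
      moreover have "(- a) * d \<in> B" using Bneg[OF d(3)] by simp
      then have "- a \<in> Q" using QI[OF d(1) d(2)] h2 by simp
      ultimately show "a \<in> Q \<inter> uminus ` Q" using um_iff by blast
    qed
    have ordQ: "ordering_of UNIV Q"
      unfolding ordering_of_def
    proof (intro conjI ballI)
      show "Q \<subseteq> UNIV" by simp
    next
      fix x y assume x: "x \<in> Q" and y: "y \<in> Q"
      obtain d1 where d1: "d1 \<in> B" "d1 \<notin> p" "x * d1 \<in> B" "x * d1 * d1 \<in> P" using x Q_def by blast
      obtain d2 where d2: "d2 \<in> B" "d2 \<notin> p" "y * d2 \<in> B" "y * d2 * d2 \<in> P" using y Q_def by blast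
      have dB: "d1 * d2 \<in> B" using Bmul d1 d2 by blast
      have dp: "d1 * d2 \<notin> p" using pnot d1 d2 by blast
      have "(x * d1) * d2 + (y * d2) * d1 \<in> B" using Badd Bmul d1 d2 by blast
      then have s1: "(x + y) * (d1 * d2) \<in> B" by (simp add: algebra_simps)
      have "(x * d1 * d1) * (d2 * d2) + (y * d2 * d2) * (d1 * d1) \<in> P"
        using Padd Pmul sq d1 d2 by blast
      then have s2: "(x + y) * (d1 * d2) * (d1 * d2) \<in> P" by (simp add: algebra_simps)
      show "x + y \<in> Q" by (rule QI[OF dB dp s1 s2])
      have "(x * d1) * (y * d2) \<in> B" using Bmul d1 d2 by blast
      then have m1: "(x * y) * (d1 * d2) \<in> B" by (simp add: algebra_simps)
      have "(x * d1 * d1) * (y * d2 * d2) \<in> P" using Pmul d1 d2 by blast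
      then have m2: "(x * y) * (d1 * d2) * (d1 * d2) \<in> P" by (simp add: algebra_simps)
      show "x * y \<in> Q" by (rule QI[OF dB dp m1 m2])
    next
      show "Q \<union> uminus ` Q = UNIV"
      proof (intro equalityI subsetI)
        fix a :: 'a
        obtain d where d: "d \<in> B" "d \<notin> p" "a * d \<in> B" using Frp by blast
        have add: "a * d * d \<in> B" using Bmul d by blast
        show "a \<in> Q \<union> uminus ` Q"
        proof (cases "a * d * d \<in> P")
          case True
          then show ?thesis using QI[OF d True] by blast
        next
          case False
          then have h: "- (a * d * d) \<in> P" using Ptot' add by blast
          have "(- a) * d \<in> B" using Bneg[OF d(3)] by simp
          then have "- a \<in> Q" using QI[OF d(1) d(2)] h by simp
          then show ?thesis using um_iff by blast
        qed
      qed simp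
    next
      show "prime_ideal_in UNIV (Q \<inter> uminus ` Q)" using Qp pp by simp
    qed
    have TQ: "T \<subseteq> Q"
    proof
      fix t assume t: "t \<in> T"
      obtain d where d: "d \<in> B" "d \<notin> p" "t * d \<in> B" using Frp by blast
      have "t * d ^ 2 \<in> T" using preT[OF t sqT] .
      then have "t * d * d \<in> T" by (simp add: power2_eq_square mult.assoc)
      moreover have "t * d * d \<in> B" using Bmul d by blast
      ultimately have "t * d * d \<in> P" using TP by blast
      then show "t \<in> Q" by (rule QI[OF d])
    qed
    have "Q \<in> sper UNIV T" using ordQ TQ by (simp add: sper_def)
    moreover have "minimal_prime_in UNIV (Q \<inter> uminus ` Q)" using Qp pM by (simp add: MP_def)
    ultimately have archQ: "archimedean_ordering UNIV Q"
      using aa unfolding almost_archimedean_def by blast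
    show "archimedean_ordering B P"
      unfolding archimedean_ordering_def
    proof
      fix a assume aB: "a \<in> B"
      obtain N :: nat where N: "of_nat N - a \<in> Q" using archQ unfolding archimedean_ordering_def by blast
      have cB: "(of_nat N - a) * 1 \<in> B" using Badd[OF Bnat Bneg[OF aB]] by simp
      have "(of_nat N - a) * 1 * 1 \<in> P" by (rule Qall[OF N B1 _ cB]) (use pp prime_UNIV_iff in blast)
      then show "\<exists>N::nat. of_nat N - a \<in> P" by auto
    qed
  qed
  moreover have "fg_K_subalgebra K iota B" unfolding fg_K_subalgebra_def B_def using finG by blast
  moreover have "F \<subseteq> B" using GB unfolding G_def by blast
  ultimately show ?thesis by blast
qed



theorem lemma4p7:
  fixes K :: "real set" and iota :: "real \<Rightarrow> 'a::comm_ring_1" and T :: "'a set"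
  assumes "subfield_of_reals K"
    and "K_algebra_map K iota"
    and "preordering T"
    and "ff_algebra K iota"
    and "almost_archimedean (UNIV :: 'a set) T"
    and "reduced TYPE('a)"
  shows "(UNIV :: 'a set) = \<Union> {B. fg_K_subalgebra K iota B \<and> almost_archimedean B (T \<inter> B)}
    \<and> (\<forall>F. finite F \<longrightarrow>
         (\<exists>B. fg_K_subalgebra K iota B \<and> almost_archimedean B (T \<inter> B) \<and> F \<subseteq> B))
    \<and> (\<forall>B1 B2. fg_K_subalgebra K iota B1 \<and> almost_archimedean B1 (T \<inter> B1)
            \<and> fg_K_subalgebra K iota B2 \<and> almost_archimedean B2 (T \<inter> B2) \<longrightarrow>
         (\<exists>B3. fg_K_subalgebra K iota B3 \<and> almost_archimedean B3 (T \<inter> B3)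
               \<and> B1 \<subseteq> B3 \<and> B2 \<subseteq> B3))"
proof -
  have c2: "\<forall>F. finite F \<longrightarrow>
         (\<exists>B. fg_K_subalgebra K iota B \<and> almost_archimedean B (T \<inter> B) \<and> F \<subseteq> B)"
    using core[OF assms(3) assms(4) assms(5) assms(6)] by blast
  have c3: "\<forall>B1 B2. fg_K_subalgebra K iota B1 \<and> almost_archimedean B1 (T \<inter> B1)
            \<and> fg_K_subalgebra K iota B2 \<and> almost_archimedean B2 (T \<inter> B2) \<longrightarrow>
         (\<exists>B3. fg_K_subalgebra K iota B3 \<and> almost_archimedean B3 (T \<inter> B3)
               \<and> B1 \<subseteq> B3 \<and> B2 \<subseteq> B3)"
  proof (intro allI impI)
    fix B1 B2 assume h: "fg_K_subalgebra K iota B1 \<and> almost_archimedean B1 (T \<inter> B1)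
            \<and> fg_K_subalgebra K iota B2 \<and> almost_archimedean B2 (T \<inter> B2)"
    obtain S1 where S1: "finite S1" "B1 = K_subalg_gen K iota S1" using h fg_K_subalgebra_def by blast
    obtain S2 where S2: "finite S2" "B2 = K_subalg_gen K iota S2" using h fg_K_subalgebra_def by blast
    obtain B where B: "fg_K_subalgebra K iota B" "almost_archimedean B (T \<inter> B)" "S1 \<union> S2 \<subseteq> B"
      using c2 S1(1) S2(1) by (meson finite_UnI)
    obtain S where S: "B = K_subalg_gen K iota S" using B(1) fg_K_subalgebra_def by blast
    have KB: "K_subalgebra K iota B" unfolding S by (rule gen_props(1))
    have "B1 \<subseteq> B" unfolding S1(2) by (rule gen_props(3)[OF KB]) (use B(3) in blast)
    moreover have "B2 \<subseteq> B" unfolding S2(2) by (rule gen_props(3)[OF KB]) (use B(3) in blast)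
    ultimately show "\<exists>B3. fg_K_subalgebra K iota B3 \<and> almost_archimedean B3 (T \<inter> B3)
               \<and> B1 \<subseteq> B3 \<and> B2 \<subseteq> B3" using B by blast
  qed
  have c1: "(UNIV :: 'a set) = \<Union> {B. fg_K_subalgebra K iota B \<and> almost_archimedean B (T \<inter> B)}"
  proof (intro equalityI subsetI)
    fix x :: 'a
    obtain B where "fg_K_subalgebra K iota B" "almost_archimedean B (T \<inter> B)" "{x} \<subseteq> B"
      using c2 by (meson finite.emptyI finite_insert)
    then show "x \<in> \<Union> {B. fg_K_subalgebra K iota B \<and> almost_archimedean B (T \<inter> B)}" by blast
  qed simp
  show ?thesis using c1 c2 c3 by blast
qed

end
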